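(* Let $R$ be a domain, $m\geqslant 2$, and let $G$ be a finite undirected graph without loops with vertex set $A=\{a_1,\dots,a_n\}$, $n\geqslant 2$, such that the complement graph $\overline{G}$ is connected. Suppose the partially commutative nilpotent Lie algebra $\mathcal{N}_m(A;G)=L_1\oplus L_2$ is a direct sum of two subalgebras such that for every $i\in\{1,\dots,n\}$ we have $(a_i)_1=a_i+g_i$ and $(a_i)_2=-g_i$ with $g_i\in\mathcal{N}_m(A;G)$ and $a_i\notin\mathrm{supp}(\omega_1(g_i))$. Then $O_{m-1}(g_i)=0$ for all $i\in\{1,\dots,n\}$.
   Context: All Lie algebras are over the domain $R$. The complement graph $\overline{G}$ has vertex set $A$, with distinct vertices adjacent iff they are not adjacent in $G$. $\mathcal{N}_m(A;G)$ is the Lie $R$-algebra presented in the variety of nilpotent Lie algebras of degree $m$ (all Lie products of $m+1$ elements vanish) by generators $A$ and relations $[a_p,a_q]=0$ for all edges $\{a_p,a_q\}$ of $G$. Since relations and identities are multi-homogeneous, every element $h$ is uniquely a sum of nonzero multi-homogeneous components (multi-degree of a Lie monomial = vector counting occurrences of each $a_p$; its length is the sum of the entries). $\mathrm{supp}(h)$ is the set of $a_p$ occurring with nonzero exponent in the multi-degree of some component of $h$; $\omega_k(h)$ is the sum of the components of length $k$ and $O_k(h)=\sum_{j=1}^k\omega_j(h)$. A direct sum $L=L_1\oplus L_2$ of subalgebras means $L_1,L_2$ are subalgebras, $L=L_1\oplus L_2$ as $R$-modules and $[L_1,L_2]=0$; for $h\in L$, $(h)_1\in L_1$, $(h)_2\in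 L_2$ are the unique elements with $h=(h)_1+(h)_2$. *)

theory Defs
  imports Main "HOL-Library.Poly_Mapping"
begin

text \<open>Lie monomials (non-associative words) over the generator set, i.e. elements
  of the free magma on the vertex type 'a.\<close>
datatype 'a ltree = Leaf 'a | Br "'a ltree" "'a ltree"

fun tlen :: "'a ltree \<Rightarrow> nat" where
  "tlen (Leaf a) = 1"
| "tlen (Br s t) = tlen s + tlen t"

fun mdeg :: "'a ltree \<Rightarrow> 'a \<Rightarrow> nat" where
  "mdeg (Leaf a) = (\<lambda>p. if p = a then 1 else 0)"
| "mdeg (Br s t) = (\<lambda>p. mdeg s p + mdeg t p)"

text \<open>Elements of the free non-associative R-algebra on 'a: finitely supported
  R-linear combinations of Lie monomials.  Elements of N_m(A;G) are represented
  by such elements modulo the ideal lideal below.\<close>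
type_synonym ('a,'r) nael = "'a ltree \<Rightarrow>\<^sub>0 'r"

definition gen :: "'a \<Rightarrow> ('a,'r::comm_ring_1) nael" where
  "gen a = Poly_Mapping.single (Leaf a) 1"

definition smul :: "'r::comm_ring_1 \<Rightarrow> ('a,'r) nael \<Rightarrow> ('a,'r) nael" where
  "smul c x = Poly_Mapping.map (\<lambda>y. c * y) x"

definition br :: "('a,'r::comm_ring_1) nael \<Rightarrow> ('a,'r) nael \<Rightarrow> ('a,'r) nael" where
  "br x y = (\<Sum>s\<in>Poly_Mapping.keys x. \<Sum>t\<in>Poly_Mapping.keys y.
              Poly_Mapping.single (Br s t) (Poly_Mapping.lookup x s * Poly_Mapping.lookup y t))"

text \<open>The ideal of the free non-associative algebra whose quotient is
  N_m(A;G): generated by the Lie identities (alternating law, Jacobi), the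
  nilpotency identities of degree m (all monomials of length > m) and the
  defining relations [a_p,a_q] for edges of G.\<close>
inductive_set lideal :: "nat \<Rightarrow> ('a \<Rightarrow> 'a \<Rightarrow> bool) \<Rightarrow> ('a,'r::comm_ring_1) nael set"
  for m :: nat and E :: "'a \<Rightarrow> 'a \<Rightarrow> bool" where
  alt: "br x x \<in> lideal m E"
| jac: "br x (br y z) + br y (br z x) + br z (br x y) \<in> lideal m E"
| nil: "tlen t > m \<Longrightarrow> Poly_Mapping.single t 1 \<in> lideal m E"
| rel: "E p q \<Longrightarrow> br (gen p) (gen q) \<in> lideal m E"
| zero: "0 \<in> lideal m E"
| add: "x \<in> lideal m E \<Longrightarrow> y \<in> lideal m E \<Longrightarrow> x + y \<in> lideal m E"
| smul: "x \<in> lideal m E \<Longrightarrow> smul c x \<in> lideal m E"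
| brl: "x \<in> lideal m E \<Longrightarrow> br x y \<in> lideal m E"
| brr: "x \<in> lideal m E \<Longrightarrow> br y x \<in> lideal m E"

definition Neq :: "nat \<Rightarrow> ('a \<Rightarrow> 'a \<Rightarrow> bool) \<Rightarrow> ('a,'r::comm_ring_1) nael \<Rightarrow> ('a,'r) nael \<Rightarrow> bool" where
  "Neq m E x y \<longleftrightarrow> x - y \<in> lideal m E"

text \<open>A subalgebra of N_m(A;G), given as the (saturated) set of its representatives.\<close>
definition Nsubalg :: "nat \<Rightarrow> ('a \<Rightarrow> 'a \<Rightarrow> bool) \<Rightarrow> ('a,'r::comm_ring_1) nael set \<Rightarrow> bool" where
  "Nsubalg m E S \<longleftrightarrow>
     (\<forall>x y. x \<in> S \<longrightarrow> Neq m E x y \<longrightarrow> y \<in> S) \<and> 0 \<in> S \<and>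
     (\<forall>x\<in>S. \<forall>y\<in>S. x + y \<in> S \<and> br x y \<in> S) \<and> (\<forall>c. \<forall>x\<in>S. smul c x \<in> S)"

definition Ndirect_sum :: "nat \<Rightarrow> ('a \<Rightarrow> 'a \<Rightarrow> bool) \<Rightarrow> ('a,'r::comm_ring_1) nael set \<Rightarrow> ('a,'r) nael set \<Rightarrow> bool" where
  "Ndirect_sum m E L1 L2 \<longleftrightarrow>
     Nsubalg m E L1 \<and> Nsubalg m E L2 \<and>
     (\<forall>h. \<exists>u\<in>L1. \<exists>v\<in>L2. Neq m E h (u + v)) \<and>
     (\<forall>x. x \<in> L1 \<longrightarrow> x \<in> L2 \<longrightarrow> Neq m E x 0) \<and>
     (\<forall>u\<in>L1. \<forall>v\<in>L2. Neq m E (br u v) 0)"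

text \<open>The components (h)_1 and (h)_2 (a representative of them).\<close>
definition proj1 :: "nat \<Rightarrow> ('a \<Rightarrow> 'a \<Rightarrow> bool) \<Rightarrow> ('a,'r::comm_ring_1) nael set \<Rightarrow> ('a,'r) nael set \<Rightarrow> ('a,'r) nael \<Rightarrow> ('a,'r) nael" where
  "proj1 m E L1 L2 h = (SOME u. u \<in> L1 \<and> (\<exists>v\<in>L2. Neq m E h (u + v)))"

definition proj2 :: "nat \<Rightarrow> ('a \<Rightarrow> 'a \<Rightarrow> bool) \<Rightarrow> ('a,'r::comm_ring_1) nael set \<Rightarrow> ('a,'r) nael set \<Rightarrow> ('a,'r) nael \<Rightarrow> ('a,'r) nael" where
  "proj2 m E L1 L2 h = (SOME v. v \<in> L2 \<and> (\<exists>u\<in>L1. Neq m E h (u + v)))"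

text \<open>Homogeneous components (well defined modulo lideal, which is multi-homogeneous).\<close>
definition mcomp :: "('a \<Rightarrow> nat) \<Rightarrow> ('a,'r::comm_ring_1) nael \<Rightarrow> ('a,'r) nael" where
  "mcomp d h = Poly_Mapping.mapp (\<lambda>t c. if mdeg t = d then c else 0) h"

definition omega :: "nat \<Rightarrow> ('a,'r::comm_ring_1) nael \<Rightarrow> ('a,'r) nael" where
  "omega k h = Poly_Mapping.mapp (\<lambda>t c. if tlen t = k then c else 0) h"

definition Ocomp :: "nat \<Rightarrow> ('a,'r::comm_ring_1) nael \<Rightarrow> ('a,'r) nael" where
  "Ocomp k h = (\<Sum>j\<in>{1..k}. omega j h)"

definition Nsupp :: "nat \<Rightarrow> ('a \<Rightarrow> 'a \<Rightarrow> bool) \<Rightarrow> ('a,'r::comm_ring_1) nael \<Rightarrow> 'a set" where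
  "Nsupp m E h = {p. \<exists>d. \<not> Neq m E (mcomp d h) 0 \<and> d p > 0}"

definition compl_connected :: "('a \<Rightarrow> 'a \<Rightarrow> bool) \<Rightarrow> bool" where
  "compl_connected E \<longleftrightarrow> (\<forall>p q. (\<lambda>x y. x \<noteq> y \<and> \<not> E x y)\<^sup>*\<^sup>* p q)"

end

theory Submission
  imports Defs
begin

lemma lookup_smul[simp]: "Poly_Mapping.lookup (smul c x) t = c * Poly_Mapping.lookup x t"
  by (simp add: smul_def Poly_Mapping.map.rep_eq when_def)

lemma lookup_gen: "Poly_Mapping.lookup (gen a) t = (if t = Leaf a then 1 else 0)"
  by (simp add: gen_def lookup_single when_def)

lemma lookup_br_Leaf[simp]: "Poly_Mapping.lookup (br x y) (Leaf a) = 0"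
  by (simp add: br_def lookup_sum lookup_single when_def)

lemma lookup_br_Br[simp]: "Poly_Mapping.lookup (br x y) (Br s0 t0) = Poly_Mapping.lookup x s0 * Poly_Mapping.lookup y t0"
proof -
  have "Poly_Mapping.lookup (br x y) (Br s0 t0) = (\<Sum>s\<in>Poly_Mapping.keys x. \<Sum>t\<in>Poly_Mapping.keys y. if s = s0 \<and> t = t0 then Poly_Mapping.lookup x s * Poly_Mapping.lookup y t else 0)"
    by (simp add: br_def lookup_sum lookup_single when_def)
  also have "\<dots> = (\<Sum>s\<in>Poly_Mapping.keys x. if s = s0 then (\<Sum>t\<in>Poly_Mapping.keys y. if t = t0 then Poly_Mapping.lookup x s * Poly_Mapping.lookup y t else 0) else 0)"
    by (rule sum.cong) auto
  also have "\<dots> = Poly_Mapping.lookup x s0 * Poly_Mapping.lookup y t0"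
    by (simp add: in_keys_iff)
  finally show ?thesis .
qed

lemma lookup_omega: "Poly_Mapping.lookup (omega k x) t = (if tlen t = k then Poly_Mapping.lookup x t else 0)"
  by (simp add: omega_def lookup_mapp when_def in_keys_iff)

lemma lookup_mcomp: "Poly_Mapping.lookup (mcomp d x) t = (if mdeg t = d then Poly_Mapping.lookup x t else 0)"
  by (simp add: mcomp_def lookup_mapp when_def in_keys_iff)

lemma br_add_left: "br (x + y) z = br x z + br y z"
  by (rule poly_mapping_eqI, case_tac k) (auto simp: lookup_add algebra_simps)
lemma br_add_right: "br z (x + y) = br z x + br z y"
  by (rule poly_mapping_eqI, case_tac k) (auto simp: lookup_add algebra_simps)
lemma br_minus_left: "br (x - y) z = br x z - br y z"
  by (rule poly_mapping_eqI, case_tac k) (auto simp: lookup_minus algebra_simps)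
lemma br_minus_right: "br z (x - y) = br z x - br z y"
  by (rule poly_mapping_eqI, case_tac k) (auto simp: lookup_minus algebra_simps)
lemma br_uminus_left: "br (- x) z = - br x z"
  by (rule poly_mapping_eqI, case_tac k) (auto simp: algebra_simps)
lemma br_zero_left[simp]: "br 0 z = 0"
  by (rule poly_mapping_eqI, case_tac k) auto
lemma br_zero_right[simp]: "br z 0 = 0"
  by (rule poly_mapping_eqI, case_tac k) auto
lemma br_smul_left: "br (smul c x) z = smul c (br x z)"
  by (rule poly_mapping_eqI, case_tac k) (auto simp: algebra_simps)
lemma br_smul_right: "br z (smul c x) = smul c (br z x)"
  by (rule poly_mapping_eqI, case_tac k) (auto simp: algebra_simps)
lemma smul_add: "smul c (x + y) = smul c x + smul c y"
  by (rule poly_mapping_eqI) (auto simp: lookup_add algebra_simps)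
lemma smul_minus: "smul c (x - y) = smul c x - smul c y"
  by (rule poly_mapping_eqI) (auto simp: lookup_minus algebra_simps)
lemma smul_m1: "smul (-1) x = - x"
  by (rule poly_mapping_eqI) auto
lemma smul_sum: "smul c (sum f A) = (\<Sum>i\<in>A. smul c (f i))"
  by (rule poly_mapping_eqI) (auto simp: lookup_sum sum_distrib_left)
lemma br_sum_left: "br (sum f A) z = (\<Sum>i\<in>A. br (f i) z)"
  by (induction A rule: infinite_finite_induct) (auto simp: br_add_left)
lemma br_sum_right: "br z (sum f A) = (\<Sum>i\<in>A. br z (f i))"
  by (induction A rule: infinite_finite_induct) (auto simp: br_add_right)
lemma single_Br: "Poly_Mapping.single (Br s t) (1::'r::comm_ring_1) = br (Poly_Mapping.single s 1) (Poly_Mapping.single t 1)"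
  by (rule poly_mapping_eqI, case_tac k) (auto simp: lookup_single when_def)
lemma keys_br: "u \<in> Poly_Mapping.keys (br x y) \<Longrightarrow> \<exists>s t. u = Br s t \<and> s \<in> Poly_Mapping.keys x \<and> t \<in> Poly_Mapping.keys y"
  by (cases u) (auto simp: in_keys_iff)
lemma keys_smul: "Poly_Mapping.keys (smul c x) \<subseteq> Poly_Mapping.keys x"
  by (auto simp: in_keys_iff)
lemma expand: "x = (\<Sum>t\<in>Poly_Mapping.keys x. smul (Poly_Mapping.lookup x t) (Poly_Mapping.single t (1::'r::comm_ring_1)))"
proof (rule poly_mapping_eqI)
  fix k
  show "Poly_Mapping.lookup x k = Poly_Mapping.lookup (\<Sum>t\<in>Poly_Mapping.keys x. smul (Poly_Mapping.lookup x t) (Poly_Mapping.single t 1)) k"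
  proof -
    have "Poly_Mapping.lookup (\<Sum>t\<in>Poly_Mapping.keys x. smul (Poly_Mapping.lookup x t) (Poly_Mapping.single t 1)) k
       = (\<Sum>t\<in>Poly_Mapping.keys x. if t = k then Poly_Mapping.lookup x t else 0)"
      by (simp add: lookup_sum lookup_single when_def if_distrib cong: if_cong)
    also have "\<dots> = Poly_Mapping.lookup x k" by (simp add: in_keys_iff)
    finally show ?thesis by simp
  qed
qed

lemma li_uminus: "x \<in> lideal m E \<Longrightarrow> - x \<in> lideal m E"
  by (metis lideal.smul smul_m1)
lemma li_diff: "x \<in> lideal m E \<Longrightarrow> y \<in> lideal m E \<Longrightarrow> x - y \<in> lideal m E"
  by (metis lideal.add li_uminus diff_conv_add_uminus)
lemma li_sum: "(\<And>i. i \<in> A \<Longrightarrow> f i \<in> lideal m E) \<Longrightarrow> sum f A \<in> lideal m E"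
  by (induction A rule: infinite_finite_induct) (auto intro: lideal.intros)
lemma li_anti: "br x y + br y x \<in> lideal m E"
proof -
  have "br x y + br y x = br (x+y) (x+y) - br x x - br y y"
    by (simp add: br_add_left br_add_right algebra_simps)
  thus ?thesis by (metis li_diff lideal.alt)
qed

definition homog :: "nat \<Rightarrow> ('a,'r::comm_ring_1) nael \<Rightarrow> bool" where
  "homog d x \<longleftrightarrow> (\<forall>t\<in>Poly_Mapping.keys x. tlen t = d)"

lemma omega_homog: "homog d x \<Longrightarrow> omega k x = (if k = d then x else 0)"
  by (rule poly_mapping_eqI) (auto simp: homog_def lookup_omega in_keys_iff)
lemma homog_br: "homog d x \<Longrightarrow> homog e y \<Longrightarrow> homog (d+e) (br x y)"
  unfolding homog_def by (metis keys_br tlen.simps(2))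
lemma homog_add: "homog d x \<Longrightarrow> homog d y \<Longrightarrow> homog d (x + y)"
  unfolding homog_def using keys_add by (metis Un_iff in_mono)
lemma homog_omega: "homog k (omega k x)"
  unfolding homog_def by (auto simp: in_keys_iff lookup_omega split: if_splits)
lemma homog_single: "homog (tlen t) (Poly_Mapping.single t c)"
  unfolding homog_def by (auto simp: in_keys_iff lookup_single when_def split: if_splits)
lemma omega_add: "omega k (x + y) = omega k x + omega k y"
  by (rule poly_mapping_eqI) (auto simp: lookup_omega lookup_add)
lemma omega_smul: "omega k (smul c x) = smul c (omega k x)"
  by (rule poly_mapping_eqI) (auto simp: lookup_omega)
lemma omega_zero[simp]: "omega k 0 = 0"
  by (rule poly_mapping_eqI) (auto simp: lookup_omega)
lemma decomp: "x = (\<Sum>i\<in>tlen ` Poly_Mapping.keys x. omega i x)"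
proof (rule poly_mapping_eqI)
  fix k
  have "Poly_Mapping.lookup (\<Sum>i\<in>tlen ` Poly_Mapping.keys x. omega i x) k
     = (\<Sum>i\<in>tlen ` Poly_Mapping.keys x. if i = tlen k then Poly_Mapping.lookup x k else 0)"
    by (auto simp: lookup_sum lookup_omega intro!: sum.cong)
  also have "\<dots> = Poly_Mapping.lookup x k" by (auto simp: in_keys_iff)
  finally show "Poly_Mapping.lookup x k = Poly_Mapping.lookup (\<Sum>i\<in>tlen ` Poly_Mapping.keys x. omega i x) k" by simp
qed

definition Ig :: "nat \<Rightarrow> ('a \<Rightarrow> 'a \<Rightarrow> bool) \<Rightarrow> ('a,'r::comm_ring_1) nael set" where
  "Ig m E = {x. \<forall>k. omega k x \<in> lideal m E}"

lemma Ig_add: "x \<in> Ig m E \<Longrightarrow> y \<in> Ig m E \<Longrightarrow> x + y \<in> Ig m E"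
  by (auto simp: Ig_def omega_add intro: lideal.add)
lemma Ig_zero: "0 \<in> Ig m E"
  by (simp add: Ig_def lideal.zero)
lemma Ig_sum: "(\<And>i. i \<in> A \<Longrightarrow> f i \<in> Ig m E) \<Longrightarrow> sum f A \<in> Ig m E"
  by (induction A rule: infinite_finite_induct) (auto intro!: Ig_add Ig_zero)
lemma Ig_homog: "homog d x \<Longrightarrow> x \<in> lideal m E \<Longrightarrow> x \<in> Ig m E"
  by (auto simp: Ig_def omega_homog intro: lideal.zero)

lemma Ig_alt_aux: "finite A \<Longrightarrow> (\<And>i. i \<in> A \<Longrightarrow> \<exists>d. homog d (f i)) \<Longrightarrow> br (sum f A) (sum f A) \<in> Ig m E"
proof (induction A rule: finite_induct)
  case empty
  then show ?case by (simp add: Ig_def lideal.zero)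
next
  case (insert a A)
  obtain da where da: "homog da (f a)" using insert by auto
  have "br (sum f (insert a A)) (sum f (insert a A)) = br (f a) (f a) + (br (f a) (sum f A) + br (sum f A) (f a)) + br (sum f A) (sum f A)"
    using insert by (simp add: br_add_left br_add_right algebra_simps)
  moreover have "br (f a) (f a) \<in> Ig m E" by (rule Ig_homog[OF homog_br[OF da da]]) (rule lideal.alt)
  moreover have "br (f a) (sum f A) + br (sum f A) (f a) \<in> Ig m E"
  proof -
    have "br (f a) (sum f A) + br (sum f A) (f a) = (\<Sum>i\<in>A. br (f a) (f i) + br (f i) (f a))"
      by (simp add: br_sum_left br_sum_right sum.distrib)
    also have "\<dots> \<in> Ig m E"
    proof (rule Ig_sum)
      fix i assume "i \<in> A"
      then obtain di where di: "homog di (f i)" using insert by auto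
      show "br (f a) (f i) + br (f i) (f a) \<in> Ig m E"
        apply (rule Ig_homog[where d="da+di"])
         apply (rule homog_add[OF homog_br[OF da di]])
        using homog_br[OF di da] apply (simp add: add.commute)
        by (rule li_anti)
    qed
    finally show ?thesis .
  qed
  ultimately show ?case using insert by (auto intro!: Ig_add)
qed

lemma Ig_alt: "br x x \<in> Ig m E"
proof -
  have "br x x = br (\<Sum>i\<in>tlen ` Poly_Mapping.keys x. omega i x) (\<Sum>i\<in>tlen ` Poly_Mapping.keys x. omega i x)"
    using decomp[of x] by simp
  also have "\<dots> \<in> Ig m E" by (rule Ig_alt_aux) (auto intro: homog_omega)
  finally show ?thesis .
qed

definition jacf where "jacf x y z = br x (br y z) + br y (br z x) + br z (br x y)"

lemma jacf_cyc: "jacf x y z = jacf y z x"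
  by (simp add: jacf_def algebra_simps)
lemma jacf_sum: "jacf (sum f A) y z = (\<Sum>i\<in>A. jacf (f i) y z)"
  by (simp add: jacf_def br_sum_left br_sum_right sum.distrib)
lemma homog_jacf: "homog a x \<Longrightarrow> homog b y \<Longrightarrow> homog c z \<Longrightarrow> homog (a+b+c) (jacf x y z)"
  unfolding jacf_def
  apply (rule homog_add)+
  using homog_br by (metis add.assoc add.commute)+

lemma Ig_jac: "jacf x y z \<in> Ig m E"
proof -
  let ?X = "tlen ` Poly_Mapping.keys x" and ?Y = "tlen ` Poly_Mapping.keys y" and ?Z = "tlen ` Poly_Mapping.keys z"
  have "jacf x y z = (\<Sum>i\<in>?X. jacf (omega i x) y z)"
    by (subst decomp[of x]) (simp add: jacf_sum)
  also have "\<dots> = (\<Sum>i\<in>?X. \<Sum>j\<in>?Y. jacf (omega j y) z (omega i x))"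
    apply (rule sum.cong, simp)
    apply (subst jacf_cyc)
    by (subst decomp[of y]) (simp add: jacf_sum)
  also have "\<dots> = (\<Sum>i\<in>?X. \<Sum>j\<in>?Y. \<Sum>l\<in>?Z. jacf (omega l z) (omega i x) (omega j y))"
    apply (rule sum.cong, simp)
    apply (rule sum.cong, simp)
    apply (subst jacf_cyc)
    by (subst decomp[of z]) (simp add: jacf_sum)
  also have "\<dots> \<in> Ig m E"
    apply (intro Ig_sum)
    apply (rule Ig_homog[OF homog_jacf[OF homog_omega homog_omega homog_omega]])
    unfolding jacf_def by (rule lideal.jac)
  finally show ?thesis .
qed

lemma Ig_brl: "x \<in> Ig m E \<Longrightarrow> br x y \<in> Ig m E"
proof -
  assume x: "x \<in> Ig m E"
  have "br x y = (\<Sum>i\<in>tlen ` Poly_Mapping.keys x. \<Sum>j\<in>tlen ` Poly_Mapping.keys y. br (omega i x) (omega j y))"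
    by (subst decomp[of x], subst decomp[of y]) (simp add: br_sum_left br_sum_right sum.swap[of _ "tlen ` Poly_Mapping.keys x"])
  also have "\<dots> \<in> Ig m E"
    apply (intro Ig_sum)
    apply (rule Ig_homog[OF homog_br[OF homog_omega homog_omega]])
    using x by (auto simp: Ig_def intro: lideal.brl)
  finally show ?thesis .
qed

lemma Ig_brr: "x \<in> Ig m E \<Longrightarrow> br y x \<in> Ig m E"
proof -
  assume x: "x \<in> Ig m E"
  have "br y x = (\<Sum>i\<in>tlen ` Poly_Mapping.keys y. \<Sum>j\<in>tlen ` Poly_Mapping.keys x. br (omega i y) (omega j x))"
    by (subst decomp[of x], subst decomp[of y]) (simp add: br_sum_left br_sum_right sum.swap[of _ "tlen ` Poly_Mapping.keys x"])
  also have "\<dots> \<in> Ig m E"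
    apply (intro Ig_sum)
    apply (rule Ig_homog[OF homog_br[OF homog_omega homog_omega]])
    using x by (auto simp: Ig_def intro: lideal.brr)
  finally show ?thesis .
qed

lemma homog_gen: "homog 1 (gen p)"
  unfolding gen_def using homog_single[of "Leaf p" 1] by simp

lemma lideal_Ig: "x \<in> lideal m E \<Longrightarrow> x \<in> Ig m E"
proof (induction rule: lideal.induct)
  case (alt x) then show ?case by (rule Ig_alt)
next
  case (jac x y z) then show ?case using Ig_jac[of x y z] by (simp add: jacf_def)
next
  case (nil t) then show ?case by (intro Ig_homog[OF homog_single] lideal.nil)
next
  case (rel p q) then show ?case
    by (intro Ig_homog[OF homog_br[OF homog_gen homog_gen]] lideal.rel)
next
  case zero then show ?case by (simp add: Ig_def lideal.zero)
next
  case (add x y) then show ?case by (simp add: Ig_add)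
next
  case (smul x c) then show ?case by (auto simp: Ig_def omega_smul intro: lideal.smul)
next
  case (brl x y) then show ?case by (simp add: Ig_brl)
next
  case (brr x y) then show ?case by (simp add: Ig_brr)
qed

lemma lideal_omega: "x \<in> lideal m E \<Longrightarrow> omega k x \<in> lideal m E"
  using lideal_Ig[of x m E] by (simp add: Ig_def)

lemma tlen_pos: "tlen t \<ge> 1"
  by (induction t) auto

lemma lideal_low:
  assumes m: "m \<ge> 2" and sym: "\<And>p q. E p q \<Longrightarrow> E q p"
  shows "x \<in> lideal m E \<Longrightarrow> (\<forall>p. Poly_Mapping.lookup x (Leaf p) = 0) \<and>
     (\<forall>p q. p \<noteq> q \<and> \<not> E p q \<longrightarrow> Poly_Mapping.lookup x (Br (Leaf p) (Leaf q)) = Poly_Mapping.lookup x (Br (Leaf q) (Leaf p)))"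
proof (induction rule: lideal.induct)
  case (alt x) then show ?case by (simp add: mult.commute)
next
  case (jac x y z) then show ?case by (simp add: lookup_add)
next
  case (nil t)
  have "t \<noteq> Leaf p" for p using nil m by auto
  moreover have "t \<noteq> Br (Leaf p) (Leaf q)" for p q using nil m by auto
  ultimately show ?case by (simp add: lookup_single when_def)
next
  case (rel p q)
  then show ?case using sym by (auto simp: lookup_gen)
next
  case zero then show ?case by simp
next
  case (add x y) then show ?case by (simp add: lookup_add) metis
next
  case (smul x c) then show ?case by simp metis
next
  case (brl x y) then show ?case by simp
next
  case (brr x y) then show ?case by simp
qed

lemma ns_neq: "Nsubalg m E S \<Longrightarrow> x \<in> S \<Longrightarrow> x - y \<in> lideal m E \<Longrightarrow> y \<in> S"
  by (auto simp: Nsubalg_def Neq_def)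
lemma ns_add: "Nsubalg m E S \<Longrightarrow> x \<in> S \<Longrightarrow> y \<in> S \<Longrightarrow> x + y \<in> S"
  by (auto simp: Nsubalg_def)
lemma ns_br: "Nsubalg m E S \<Longrightarrow> x \<in> S \<Longrightarrow> y \<in> S \<Longrightarrow> br x y \<in> S"
  by (auto simp: Nsubalg_def)
lemma ns_smul: "Nsubalg m E S \<Longrightarrow> x \<in> S \<Longrightarrow> smul c x \<in> S"
  by (auto simp: Nsubalg_def)
lemma ns_zero: "Nsubalg m E S \<Longrightarrow> 0 \<in> S"
  by (auto simp: Nsubalg_def)
lemma ns_uminus: "Nsubalg m E S \<Longrightarrow> x \<in> S \<Longrightarrow> - x \<in> S"
  by (metis ns_smul smul_m1)
lemma ns_diff: "Nsubalg m E S \<Longrightarrow> x \<in> S \<Longrightarrow> y \<in> S \<Longrightarrow> x - y \<in> S"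
  by (metis ns_add ns_uminus diff_conv_add_uminus)
lemma ns_sum: "Nsubalg m E S \<Longrightarrow> (\<And>i. i \<in> A \<Longrightarrow> f i \<in> S) \<Longrightarrow> sum f A \<in> S"
  by (induction A rule: infinite_finite_induct) (auto intro: ns_add ns_zero)

fun subst :: "('a \<Rightarrow> ('a,'r::comm_ring_1) nael) \<Rightarrow> 'a ltree \<Rightarrow> ('a,'r) nael" where
  "subst \<sigma> (Leaf p) = \<sigma> p"
| "subst \<sigma> (Br s t) = br (subst \<sigma> s) (subst \<sigma> t)"

definition Sx :: "('a \<Rightarrow> ('a,'r::comm_ring_1) nael) \<Rightarrow> ('a,'r) nael \<Rightarrow> ('a,'r) nael" where
  "Sx \<sigma> x = (\<Sum>t\<in>Poly_Mapping.keys x. smul (Poly_Mapping.lookup x t) (subst \<sigma> t))"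

lemma split_tree:
  assumes S1: "Nsubalg m E L1" and S2: "Nsubalg m E L2"
    and comm: "\<And>u v. u \<in> L1 \<Longrightarrow> v \<in> L2 \<Longrightarrow> br u v \<in> lideal m E"
    and P: "\<And>p. \<sigma>P p \<in> L1" and Q: "\<And>p. \<sigma>Q p \<in> L2"
    and G: "\<And>p. gen p - (\<sigma>P p + \<sigma>Q p) \<in> lideal m E"
  shows "Poly_Mapping.single t 1 - (subst \<sigma>P t + subst \<sigma>Q t) \<in> lideal m E \<and> subst \<sigma>P t \<in> L1 \<and> subst \<sigma>Q t \<in> L2"
proof (induction t)
  case (Leaf p)
  then show ?case using P Q G by (simp add: gen_def)
next
  case (Br s u)
  let ?A = "Poly_Mapping.single s (1::'b)" and ?B = "Poly_Mapping.single u (1::'b)"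
  let ?Ps = "subst \<sigma>P s" and ?Qs = "subst \<sigma>Q s" and ?Pu = "subst \<sigma>P u" and ?Qu = "subst \<sigma>Q u"
  have e: "Poly_Mapping.single (Br s u) 1 - (subst \<sigma>P (Br s u) + subst \<sigma>Q (Br s u))
     = (br (?A - (?Ps + ?Qs)) ?B + br (?Ps + ?Qs) (?B - (?Pu + ?Qu))) + br ?Ps ?Qu + (br ?Qs ?Pu + br ?Pu ?Qs) - br ?Pu ?Qs"
    by (simp add: single_Br br_add_left br_add_right br_minus_left br_minus_right algebra_simps)
  have c1: "br ?Ps ?Qu \<in> lideal m E" "br ?Pu ?Qs \<in> lideal m E" using Br comm by auto
  have c2: "br (?A - (?Ps + ?Qs)) ?B \<in> lideal m E" using Br by (intro lideal.brl) auto
  have c3: "br (?Ps + ?Qs) (?B - (?Pu + ?Qu)) \<in> lideal m E" using Br by (intro lideal.brr) auto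
  have "Poly_Mapping.single (Br s u) 1 - (subst \<sigma>P (Br s u) + subst \<sigma>Q (Br s u)) \<in> lideal m E"
    unfolding e by (intro li_diff lideal.add c1 c2 c3 li_anti)
  then show ?case using Br S1 S2 by (auto intro: ns_br)
qed

lemma split_all:
  assumes S1: "Nsubalg m E L1" and S2: "Nsubalg m E L2"
    and comm: "\<And>u v. u \<in> L1 \<Longrightarrow> v \<in> L2 \<Longrightarrow> br u v \<in> lideal m E"
    and P: "\<And>p. \<sigma>P p \<in> L1" and Q: "\<And>p. \<sigma>Q p \<in> L2"
    and G: "\<And>p. gen p - (\<sigma>P p + \<sigma>Q p) \<in> lideal m E"
  shows "x - (Sx \<sigma>P x + Sx \<sigma>Q x) \<in> lideal m E \<and> Sx \<sigma>P x \<in> L1 \<and> Sx \<sigma>Q x \<in> L2"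
proof -
  note T = split_tree[OF S1 S2 comm P Q G]
  have "x - (Sx \<sigma>P x + Sx \<sigma>Q x) = (\<Sum>t\<in>Poly_Mapping.keys x. smul (Poly_Mapping.lookup x t) (Poly_Mapping.single t 1 - (subst \<sigma>P t + subst \<sigma>Q t)))"
    apply (subst (1) expand[of x])
    by (simp add: Sx_def smul_minus smul_add sum_subtractf sum.distrib)
  also have "\<dots> \<in> lideal m E" using T by (intro li_sum lideal.smul) auto
  finally show ?thesis using T S1 S2 unfolding Sx_def by (auto intro!: ns_sum ns_smul)
qed

definition Dk :: "nat \<Rightarrow> ('a \<Rightarrow> 'a \<Rightarrow> bool) \<Rightarrow> nat \<Rightarrow> ('a,'r::comm_ring_1) nael \<Rightarrow> bool" where
  "Dk m E k x \<longleftrightarrow> (\<exists>y\<in>lideal m E. \<forall>t\<in>Poly_Mapping.keys (x - y). k \<le> tlen t)"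

lemma Dk_mono: "Dk m E k x \<Longrightarrow> k' \<le> k \<Longrightarrow> Dk m E k' x"
  unfolding Dk_def by (meson order_trans)
lemma Dk_keys: "(\<And>t. t \<in> Poly_Mapping.keys x \<Longrightarrow> k \<le> tlen t) \<Longrightarrow> Dk m E k x"
  unfolding Dk_def by (intro bexI[of _ 0] lideal.zero) auto
lemma Dk_add: "Dk m E k x \<Longrightarrow> Dk m E k y \<Longrightarrow> Dk m E k (x + y)"
proof -
  assume "Dk m E k x" "Dk m E k y"
  then obtain a b where a: "a \<in> lideal m E" "\<forall>t\<in>Poly_Mapping.keys (x - a). k \<le> tlen t"
    and b: "b \<in> lideal m E" "\<forall>t\<in>Poly_Mapping.keys (y - b). k \<le> tlen t" unfolding Dk_def by blast
  have "x + y - (a + b) = (x - a) + (y - b)" by simp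
  then have "Poly_Mapping.keys (x + y - (a + b)) \<subseteq> Poly_Mapping.keys (x - a) \<union> Poly_Mapping.keys (y - b)"
    using keys_add by metis
  then show ?thesis unfolding Dk_def using a b lideal.add by blast
qed
lemma Dk_smul: "Dk m E k x \<Longrightarrow> Dk m E k (smul c x)"
proof -
  assume "Dk m E k x"
  then obtain a where a: "a \<in> lideal m E" "\<forall>t\<in>Poly_Mapping.keys (x - a). k \<le> tlen t" unfolding Dk_def by blast
  have "Poly_Mapping.keys (smul c x - smul c a) \<subseteq> Poly_Mapping.keys (x - a)"
    using keys_smul[of c "x - a"] by (simp add: smul_minus)
  then show ?thesis unfolding Dk_def using a lideal.smul by blast
qed
lemma Dk_uminus: "Dk m E k x \<Longrightarrow> Dk m E k (- x)"
  by (metis Dk_smul smul_m1)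
lemma Dk_zero: "Dk m E k 0"
  by (rule Dk_keys) simp
lemma Dk_sum: "(\<And>i. i \<in> A \<Longrightarrow> Dk m E k (f i)) \<Longrightarrow> Dk m E k (sum f A)"
  by (induction A rule: infinite_finite_induct) (auto intro: Dk_add Dk_zero)
lemma Dk_neq: "Dk m E k x' \<Longrightarrow> x - x' \<in> lideal m E \<Longrightarrow> Dk m E k x"
proof -
  assume "Dk m E k x'" and d: "x - x' \<in> lideal m E"
  then obtain a where a: "a \<in> lideal m E" "\<forall>t\<in>Poly_Mapping.keys (x' - a). k \<le> tlen t" unfolding Dk_def by blast
  have "x - (a + (x - x')) = x' - a" by simp
  then show ?thesis unfolding Dk_def using a d lideal.add by metis
qed
lemma Dk_br: "Dk m E a x \<Longrightarrow> Dk m E b y \<Longrightarrow> Dk m E (a + b) (br x y)"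
proof -
  assume "Dk m E a x" "Dk m E b y"
  then obtain u v where u: "u \<in> lideal m E" "\<forall>t\<in>Poly_Mapping.keys (x - u). a \<le> tlen t"
    and v: "v \<in> lideal m E" "\<forall>t\<in>Poly_Mapping.keys (y - v). b \<le> tlen t" unfolding Dk_def by blast
  have e: "br x y - (br u y + br (x - u) v) = br (x - u) (y - v)"
    by (simp add: br_minus_left br_minus_right)
  have "\<forall>t\<in>Poly_Mapping.keys (br (x - u) (y - v)). a + b \<le> tlen t"
    using u v by (fastforce dest!: keys_br intro: add_mono)
  moreover have "br u y + br (x - u) v \<in> lideal m E" using u v by (intro lideal.add lideal.brl lideal.brr)
  ultimately show ?thesis unfolding Dk_def using e by metis
qed
lemma Dk_lideal: "Dk m E (Suc m) x \<Longrightarrow> x \<in> lideal m E"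
proof -
  assume "Dk m E (Suc m) x"
  then obtain a where a: "a \<in> lideal m E" "\<forall>t\<in>Poly_Mapping.keys (x - a). Suc m \<le> tlen t" unfolding Dk_def by blast
  have "x - a \<in> lideal m E"
    apply (subst expand[of "x - a"])
    using a by (intro li_sum lideal.smul lideal.nil) auto
  then have "(x - a) + a \<in> lideal m E" using a lideal.add by blast
  then show ?thesis by simp
qed

lemma Dk_subst: "(\<And>p. Dk m E k (\<sigma> p)) \<Longrightarrow> Dk m E (k * tlen t) (subst \<sigma> t)"
  by (induction t) (auto simp: distrib_left intro: Dk_br)

theorem lemma5:
  fixes m :: nat
    and E :: "'a::finite \<Rightarrow> 'a \<Rightarrow> bool"
    and L1 L2 :: "('a, 'r::idom) nael set"
    and g :: "'a \<Rightarrow> ('a, 'r) nael"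
  assumes "m \<ge> 2"
    and "card (UNIV :: 'a set) \<ge> 2"
    and "\<And>p. \<not> E p p"
    and "\<And>p q. E p q \<Longrightarrow> E q p"
    and "compl_connected E"
    and "Ndirect_sum m E L1 L2"
    and "\<And>i. Neq m E (proj1 m E L1 L2 (gen i)) (gen i + g i)"
    and "\<And>i. Neq m E (proj2 m E L1 L2 (gen i)) (- g i)"
    and "\<And>i. i \<notin> Nsupp m E (omega 1 (g i))"
  shows "\<forall>i. Neq m E (Ocomp (m - 1) (g i)) 0"
proof -
  note m = assms(1) and Esym = assms(4)
  have S1: "Nsubalg m E L1" and S2: "Nsubalg m E L2"
    and span: "\<And>h. \<exists>u\<in>L1. \<exists>v\<in>L2. Neq m E h (u + v)"
    and inter: "\<And>x. x \<in> L1 \<Longrightarrow> x \<in> L2 \<Longrightarrow> x \<in> lideal m E"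
    and comm: "\<And>u v. u \<in> L1 \<Longrightarrow> v \<in> L2 \<Longrightarrow> br u v \<in> lideal m E"
    using assms(6) by (auto simp: Ndirect_sum_def Neq_def)
  have U: "gen i + g i \<in> L1" for i
  proof -
    obtain u v where uv: "u \<in> L1" "v \<in> L2" "Neq m E (gen i) (u + v)" using span by blast
    have "proj1 m E L1 L2 (gen i) \<in> L1"
      unfolding proj1_def using someI_ex[of "\<lambda>u. u \<in> L1 \<and> (\<exists>v\<in>L2. Neq m E (gen i) (u + v))"] uv by blast
    then show ?thesis using ns_neq[OF S1] assms(7)[of i] by (auto simp: Neq_def)
  qed
  have V: "g i \<in> L2" for i
  proof -
    obtain u v where uv: "u \<in> L1" "v \<in> L2" "Neq m E (gen i) (u + v)" using span by blast
    have "proj2 m E L1 L2 (gen i) \<in> L2"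
      unfolding proj2_def using someI_ex[of "\<lambda>v. v \<in> L2 \<and> (\<exists>u\<in>L1. Neq m E (gen i) (u + v))"] uv by blast
    then have "- g i \<in> L2" using ns_neq[OF S2] assms(8)[of i] by (auto simp: Neq_def)
    then show ?thesis using ns_uminus[OF S2] by fastforce
  qed
  define c where "c j q = Poly_Mapping.lookup (g j) (Leaf q)" for j q
  have low: "(\<forall>p. Poly_Mapping.lookup x (Leaf p) = 0) \<and>
     (\<forall>p q. p \<noteq> q \<and> \<not> E p q \<longrightarrow> Poly_Mapping.lookup x (Br (Leaf p) (Leaf q)) = Poly_Mapping.lookup x (Br (Leaf q) (Leaf p)))"
    if "x \<in> lideal m E" for x
    by (rule lideal_low[OF m]) (auto intro: Esym that)
  have cii: "c i i = 0" for i
  proof -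
    have "\<not> (\<not> Neq m E (mcomp (mdeg (Leaf i)) (omega 1 (g i))) 0 \<and> mdeg (Leaf i) i > 0)"
      using assms(9)[of i] unfolding Nsupp_def by blast
    then have "mcomp (mdeg (Leaf i)) (omega 1 (g i)) \<in> lideal m E" by (simp add: Neq_def)
    from low[OF this] have "Poly_Mapping.lookup (mcomp (mdeg (Leaf i)) (omega 1 (g i))) (Leaf i) = 0" by blast
    then show ?thesis by (simp add: lookup_mcomp lookup_omega c_def)
  qed
  have wedge: "(1 + c i i) * c j q - c i q * c j i = 0" if "q \<noteq> i" "\<not> E i q" for i j q
  proof -
    have "br (gen i + g i) (g j) \<in> lideal m E" using comm U V by blast
    from low[OF this] that have "Poly_Mapping.lookup (br (gen i + g i) (g j)) (Br (Leaf i) (Leaf q)) = Poly_Mapping.lookup (br (gen i + g i) (g j)) (Br (Leaf q) (Leaf i))"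
      by metis
    then show ?thesis using that by (simp add: lookup_add lookup_gen c_def)
  qed
  have ciq: "c i q = 0" if "q \<noteq> i" "\<not> E i q" for i q
    using wedge[OF that, of i] by (simp add: algebra_simps)
  have nb: "\<exists>i. i \<noteq> q \<and> \<not> E i q" for q
  proof -
    obtain r :: 'a where r: "r \<noteq> q"
    proof (rule ccontr)
      assume "\<not> thesis"
      then have "UNIV = {q}" using that by blast
      then have "card (UNIV :: 'a set) = card {q}" by (rule arg_cong)
      then have "card (UNIV :: 'a set) = 1" by simp
      then show False using assms(2) by simp
    qed
    have "(\<lambda>x y. x \<noteq> y \<and> \<not> E x y)\<^sup>*\<^sup>* q r" using assms(5) unfolding compl_connected_def by blast
    then obtain i where "q \<noteq> i \<and> \<not> E q i" using r by (cases rule: converse_rtranclpE) auto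
    then have "i \<noteq> q \<and> \<not> E i q" using Esym by metis
    then show ?thesis by blast
  qed
  have c0: "c j q = 0" for j q
  proof -
    obtain i where i: "i \<noteq> q" "\<not> E i q" using nb by blast
    have qi: "q \<noteq> i" using i by auto
    have "c i q = 0" by (rule ciq[OF qi i(2)])
    then show ?thesis using wedge[of q i j] i cii[of i] by simp
  qed
  have K2: "2 \<le> tlen t" if "t \<in> Poly_Mapping.keys (g j)" for j t
  proof (cases t)
    case (Leaf q) then show ?thesis using that c0[of j q] by (simp add: in_keys_iff c_def)
  next
    case (Br s u) then show ?thesis using tlen_pos[of s] tlen_pos[of u] by simp
  qed
  define \<sigma>P where "\<sigma>P p = gen p + g p" for p
  define \<sigma>Q where "\<sigma>Q p = - g p" for p
  have SP: "\<sigma>P p \<in> L1" for p using U by (simp add: \<sigma>P_def)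
  have SQ: "\<sigma>Q p \<in> L2" for p using V ns_uminus[OF S2] by (simp add: \<sigma>Q_def)
  have SG: "gen p - (\<sigma>P p + \<sigma>Q p) \<in> lideal m E" for p by (simp add: \<sigma>P_def \<sigma>Q_def lideal.zero)
  note SA = split_all[OF S1 S2 comm SP SQ SG]
  have fix2: "x - Sx \<sigma>Q x \<in> lideal m E" if "x \<in> L2" for x
  proof -
    let ?y = "x - Sx \<sigma>Q x"
    have "?y \<in> L2" using SA[of x] that ns_diff[OF S2] by blast
    moreover have "Sx \<sigma>P x - ?y \<in> lideal m E"
    proof -
      have "Sx \<sigma>P x - ?y = - (x - (Sx \<sigma>P x + Sx \<sigma>Q x))" by simp
      thus ?thesis using SA[of x] li_uminus by metis
    qed
    then have "?y \<in> L1" using ns_neq[OF S1] SA[of x] by blast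
    ultimately show ?thesis using inter by blast
  qed
  have step: "Dk m E (2 * k) (g p)" if "\<And>p. Dk m E k (g p)" for k p
  proof -
    have DQ: "Dk m E k (\<sigma>Q p)" for p unfolding \<sigma>Q_def by (rule Dk_uminus[OF that])
    have "Dk m E (2 * k) (Sx \<sigma>Q (g p))"
      unfolding Sx_def
    proof (intro Dk_sum Dk_smul)
      fix t assume "t \<in> Poly_Mapping.keys (g p)"
      then have "2 * k \<le> k * tlen t" using K2 by (simp add: mult.commute)
      then show "Dk m E (2 * k) (subst \<sigma>Q t)" by (rule Dk_mono[OF Dk_subst[OF DQ]])
    qed
    then show ?thesis by (rule Dk_neq) (rule fix2[OF V])
  qed
  have D: "Dk m E (n + 2) (g p)" for n p
  proof (induction n arbitrary: p)
    case 0 show ?case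
    proof (rule Dk_keys)
      fix t assume "t \<in> Poly_Mapping.keys (g p)"
      then show "0 + 2 \<le> tlen t" using K2 by fastforce
    qed
  next
    case (Suc n)
    have "Dk m E (2 * (n + 2)) (g p)" by (rule step) (rule Suc.IH)
    then show ?case by (rule Dk_mono) simp
  qed
  have gl: "g p \<in> lideal m E" for p
  proof -
    have "Dk m E (Suc m) (g p)" using D[of "m - 1" p] m by (simp add: Suc_diff_Suc numeral_2_eq_2)
    then show ?thesis by (rule Dk_lideal)
  qed
  show ?thesis
    unfolding Neq_def Ocomp_def using gl by (auto intro!: li_sum lideal_omega)
qed

end
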